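(* Let $q$ be a prime power. The nilpotent graph $\Gamma_{\mathfrak{N}}(\mathfrak{t}(2,\mathbb{F}_q))$ has exactly $q+1$ connected components, and each of them is a complete graph $K_{q(q-1)}$.
   Context: $\mathfrak{t}(2,\mathbb{F}_q)$ is the Lie algebra of $2\times 2$ upper triangular matrices over $\mathbb{F}_q$ with bracket $[x,y]=xy-yx$. $\langle a,b\rangle$ denotes the Lie subalgebra generated by $a,b$, and $\mathrm{nil}(L)=\{x\in L\mid \langle h,x\rangle \text{ is nilpotent for all } h\in L\}$. For a finite-dimensional non-nilpotent Lie algebra $L$, the nilpotent graph $\Gamma_{\mathfrak{N}}(L)$ is the simple undirected graph with vertex set $L\setminus\mathrm{nil}(L)$ in which distinct vertices $x,y$ are adjacent iff $\langle x,y\rangle$ is nilpotent. *)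

theory Defs
  imports "HOL-Analysis.Analysis"
begin

definition lie_bracket :: "'a::field^'n^'n \<Rightarrow> 'a^'n^'n \<Rightarrow> 'a^'n^'n" where
  "lie_bracket x y = x ** y - y ** x"

definition mat_smult :: "'a::field \<Rightarrow> 'a^'n^'n \<Rightarrow> 'a^'n^'n" where
  "mat_smult c M = (\<chi> i j. c * M $ i $ j)"

definition is_subspace :: "('a::field^'n^'n) set \<Rightarrow> bool" where
  "is_subspace W \<longleftrightarrow> 0 \<in> W \<and> (\<forall>x\<in>W. \<forall>y\<in>W. x + y \<in> W)
     \<and> (\<forall>c. \<forall>x\<in>W. mat_smult c x \<in> W)"

definition lin_span :: "('a::field^'n^'n) set \<Rightarrow> ('a^'n^'n) set" where
  "lin_span A = \<Inter>{W. is_subspace W \<and> A \<subseteq> W}"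

definition is_lie_subalg :: "('a::field^'n^'n) set \<Rightarrow> bool" where
  "is_lie_subalg S \<longleftrightarrow> is_subspace S \<and> (\<forall>x\<in>S. \<forall>y\<in>S. lie_bracket x y \<in> S)"

definition lie_gen :: "('a::field^'n^'n) set \<Rightarrow> 'a^'n^'n \<Rightarrow> 'a^'n^'n \<Rightarrow> ('a^'n^'n) set" where
  "lie_gen L a b = \<Inter>{S. is_lie_subalg S \<and> S \<subseteq> L \<and> a \<in> S \<and> b \<in> S}"

fun lower_central :: "('a::field^'n^'n) set \<Rightarrow> nat \<Rightarrow> ('a^'n^'n) set" where
  "lower_central S 0 = S"
| "lower_central S (Suc k) = lin_span {lie_bracket x y | x y. x \<in> S \<and> y \<in> lower_central S k}"

definition lie_nilpotent :: "('a::field^'n^'n) set \<Rightarrow> bool" where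
  "lie_nilpotent S \<longleftrightarrow> (\<exists>k. lower_central S k = {0})"

definition nil_set :: "('a::field^'n^'n) set \<Rightarrow> ('a^'n^'n) set" where
  "nil_set L = {x \<in> L. \<forall>h\<in>L. lie_nilpotent (lie_gen L h x)}"

definition ng_vertices :: "('a::field^'n^'n) set \<Rightarrow> ('a^'n^'n) set" where
  "ng_vertices L = L - nil_set L"

definition ng_adj :: "('a::field^'n^'n) set \<Rightarrow> 'a^'n^'n \<Rightarrow> 'a^'n^'n \<Rightarrow> bool" where
  "ng_adj L x y \<longleftrightarrow> x \<in> ng_vertices L \<and> y \<in> ng_vertices L \<and> x \<noteq> y
     \<and> lie_nilpotent (lie_gen L x y)"

definition conn_components :: "'v set \<Rightarrow> ('v \<Rightarrow> 'v \<Rightarrow> bool) \<Rightarrow> 'v set set" where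
  "conn_components V E = (\<lambda>x. {y \<in> V. (\<lambda>u v. u \<in> V \<and> v \<in> V \<and> E u v)\<^sup>*\<^sup>* x y}) ` V"

definition is_clique :: "'v set \<Rightarrow> ('v \<Rightarrow> 'v \<Rightarrow> bool) \<Rightarrow> bool" where
  "is_clique C E \<longleftrightarrow> (\<forall>x\<in>C. \<forall>y\<in>C. x \<noteq> y \<longrightarrow> E x y)"

definition upper_tri2 :: "('a::field^2^2) set" where
  "upper_tri2 = {M. M $ 2 $ 1 = 0}"

end

theory Submission
  imports Defs
begin


lemma mat2_eq: "(M::'a^2^2) = N \<longleftrightarrow> M$1$1 = N$1$1 \<and> M$1$2 = N$1$2 \<and> M$2$1 = N$2$1 \<and> M$2$2 = N$2$2"
  by (auto simp: vec_eq_iff forall_2)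

lemma one_neq_two2: "(1::2) \<noteq> 2" by simp

definition mk :: "'a::field \<Rightarrow> 'a \<Rightarrow> 'a \<Rightarrow> 'a^2^2" where
  "mk a b d = (\<chi> i j. if i = 1 \<and> j = 1 then a else if i = 1 \<and> j = 2 then b else if i = 2 \<and> j = 2 then d else 0)"

lemma mk_simps[simp]: "mk a b d $1$1 = a" "mk a b d $1$2 = b" "mk a b d $2$1 = 0" "mk a b d $2$2 = d"
  by (simp_all add: mk_def)

definition DD :: "'a::field^2^2 \<Rightarrow> 'a^2^2 \<Rightarrow> 'a" where
  "DD x y = (x$1$1 - x$2$2) * y$1$2 - (y$1$1 - y$2$2) * x$1$2"

lemma br_ent: "lie_bracket (x::'a::field^2^2) y $ i $ j = (x$i$1*y$1$j + x$i$2*y$2$j) - (y$i$1*x$1$j + y$i$2*x$2$j)"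
  by (simp add: lie_bracket_def matrix_matrix_mult_def sum_2)

lemma br_L: fixes x y :: "'a::field^2^2"
  assumes "x \<in> upper_tri2" "y \<in> upper_tri2"
  shows "lie_bracket x y = mk 0 (DD x y) 0"
  using assms unfolding mat2_eq br_ent upper_tri2_def DD_def by (simp add: algebra_simps)

lemma smult_ent[simp]: "mat_smult c M $ i $ j = c * M$i$j"
  by (simp add: mat_smult_def)


lemma mk_L[simp]: "mk a b d \<in> upper_tri2"
  by (simp add: upper_tri2_def)

lemma zero_mk: "(0::'a::field^2^2) = mk 0 0 0"
  by (simp add: mat2_eq)

lemma DD_trans:
  assumes "DD x w = 0" "DD w z = 0" "w$1$1 \<noteq> w$2$2 \<or> w$1$2 \<noteq> 0"
  shows "DD x z = 0"
proof -
  define a1 where "a1 = x$1$1 - x$2$2"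
  define a2 where "a2 = x$1$2"
  define b1 where "b1 = w$1$1 - w$2$2"
  define b2 where "b2 = w$1$2"
  define c1 where "c1 = z$1$1 - z$2$2"
  define c2 where "c2 = z$1$2"
  have h1: "a1*b2 - b1*a2 = 0" "b1*c2 - c1*b2 = 0"
    using assms(1,2) unfolding DD_def a1_def a2_def b1_def b2_def c1_def c2_def by auto
  have g: "DD x z = a1*c2 - c1*a2"
    unfolding DD_def a1_def a2_def c1_def c2_def by simp
  have e1: "b1 * (a1*c2 - c1*a2) = a1*(b1*c2 - c1*b2) + c1*(a1*b2 - b1*a2)"
    by (simp add: algebra_simps)
  have e2: "b2 * (a1*c2 - c1*a2) = c2*(a1*b2 - b1*a2) + a2*(b1*c2 - c1*b2)"
    by (simp add: algebra_simps)
  have "b1 \<noteq> 0 \<or> b2 \<noteq> 0" using assms(3) unfolding b1_def b2_def by auto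
  then show ?thesis
  proof
    assume "b1 \<noteq> 0"
    moreover have "b1 * (a1*c2 - c1*a2) = 0" using e1 h1 by simp
    ultimately show ?thesis using g by simp
  next
    assume "b2 \<noteq> 0"
    moreover have "b2 * (a1*c2 - c1*a2) = 0" using e2 h1 by simp
    ultimately show ?thesis using g by simp
  qed
qed

lemma DD_sym: "DD x y = 0 \<longleftrightarrow> DD y x = 0"
  unfolding DD_def by (auto simp: algebra_simps)

lemma DD_refl: "DD x x = 0"
  unfolding DD_def by (simp add: algebra_simps)

lemma lin_span_sub: "A \<subseteq> lin_span A"
  unfolding lin_span_def by blast

lemma lin_span_subspace: "is_subspace (lin_span A)"
  unfolding lin_span_def is_subspace_def by blast

lemma zero_lin_span: "0 \<in> lin_span A"
  using lin_span_subspace is_subspace_def by blast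

lemma lin_span_smult: "x \<in> lin_span A \<Longrightarrow> mat_smult c x \<in> lin_span A"
  using lin_span_subspace unfolding is_subspace_def by blast

lemma lin_span_min: "is_subspace W \<Longrightarrow> A \<subseteq> W \<Longrightarrow> lin_span A \<subseteq> W"
  unfolding lin_span_def by blast

lemma lie_gen_mem: "x \<in> lie_gen L x y" "y \<in> lie_gen L x y"
  unfolding lie_gen_def by blast+

lemma lie_gen_br: "a \<in> lie_gen L x y \<Longrightarrow> b \<in> lie_gen L x y \<Longrightarrow> lie_bracket a b \<in> lie_gen L x y"
  unfolding lie_gen_def is_lie_subalg_def by blast

lemma lie_gen_min: "is_lie_subalg T \<Longrightarrow> T \<subseteq> L \<Longrightarrow> x \<in> T \<Longrightarrow> y \<in> T \<Longrightarrow> lie_gen L x y \<subseteq> T"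
  unfolding lie_gen_def by blast

lemma nilp_if:
  fixes x y :: "'a::field^2^2"
  assumes L: "x \<in> upper_tri2" "y \<in> upper_tri2" and D: "DD x y = 0"
  shows "lie_nilpotent (lie_gen upper_tri2 x y)"
proof -
  obtain w :: "'a^2^2" where w: "w \<in> upper_tri2" "w$1$1 \<noteq> w$2$2 \<or> w$1$2 \<noteq> 0" "DD x w = 0" "DD y w = 0"
  proof (cases "x$1$1 \<noteq> x$2$2 \<or> x$1$2 \<noteq> 0")
    case True
    then show ?thesis using that[of x] L D DD_refl DD_sym by blast
  next
    case F1: False
    show ?thesis
    proof (cases "y$1$1 \<noteq> y$2$2 \<or> y$1$2 \<noteq> 0")
      case True
      then show ?thesis using that[of y] L D DD_refl DD_sym F1 by blast
    next
      case False
      then show ?thesis using that[of "mk 1 0 0"] F1 by (simp add: DD_def)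
    qed
  qed
  define T where "T = {z \<in> upper_tri2. DD z w = 0}"
  have sub: "is_subspace T"
  proof -
    have "DD (a + b) w = DD a w + DD b w" for a b
      by (simp add: DD_def algebra_simps)
    moreover have "DD (mat_smult c a) w = c * DD a w" for a c
      by (simp add: DD_def algebra_simps)
    moreover have "DD 0 w = 0" by (simp add: DD_def)
    ultimately show ?thesis unfolding is_subspace_def T_def
      by (auto simp: upper_tri2_def)
  qed
  have ab: "\<And>a b. a \<in> T \<Longrightarrow> b \<in> T \<Longrightarrow> lie_bracket a b = 0"
  proof -
    fix a b assume "a \<in> T" "b \<in> T"
    then have "a \<in> upper_tri2" "b \<in> upper_tri2" "DD a b = 0"
      unfolding T_def using DD_trans[of a w b] DD_sym w(2) by auto
    then show "lie_bracket a b = 0" using br_L zero_mk by metis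
  qed
  have "is_lie_subalg T" unfolding is_lie_subalg_def using sub ab
    by (metis is_subspace_def)
  moreover have "x \<in> T" "y \<in> T" unfolding T_def using L w by auto
  ultimately have ST: "lie_gen upper_tri2 x y \<subseteq> T"
    using lie_gen_min[of T upper_tri2 x y] unfolding T_def by blast
  have "{lie_bracket a b |a b. a \<in> lie_gen upper_tri2 x y \<and> b \<in> lie_gen upper_tri2 x y} \<subseteq> {0}"
    using ST ab by blast
  moreover have "is_subspace {0::'a^2^2}"
    unfolding is_subspace_def by (simp add: mat2_eq)
  ultimately have "lower_central (lie_gen upper_tri2 x y) 1 \<subseteq> {0}"
    using lin_span_min by simp
  moreover have "0 \<in> lower_central (lie_gen upper_tri2 x y) 1"
    by (simp add: zero_lin_span)
  ultimately show ?thesis unfolding lie_nilpotent_def by blast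
qed

lemma nilp_only_if:
  fixes x y :: "'a::field^2^2"
  assumes L: "x \<in> upper_tri2" "y \<in> upper_tri2" and D: "DD x y \<noteq> 0"
  shows "\<not> lie_nilpotent (lie_gen upper_tri2 x y)"
proof -
  define S where "S = lie_gen upper_tri2 x y"
  define e where "e = lie_bracket x y"
  have eS: "e \<in> S" unfolding e_def S_def using lie_gen_mem lie_gen_br by blast
  have e: "e = mk 0 (DD x y) 0" unfolding e_def using br_L L by blast
  obtain z where z: "z \<in> S" "z \<in> upper_tri2" "z$1$1 \<noteq> z$2$2"
  proof (cases "x$1$1 = x$2$2")
    case True
    then have "y$1$1 \<noteq> y$2$2" using D by (auto simp: DD_def)
    then show ?thesis using that[of y] L lie_gen_mem S_def by blast
  next
    case False
    then show ?thesis using that[of x] L lie_gen_mem S_def by blast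
  qed
  have ze: "lie_bracket z e = mk 0 ((z$1$1 - z$2$2) * DD x y) 0"
  proof -
    have "e \<in> upper_tri2" using e by simp
    then have "lie_bracket z e = mk 0 (DD z e) 0" using br_L z(2) by blast
    moreover have "DD z e = (z$1$1 - z$2$2) * DD x y" unfolding DD_def e by simp
    ultimately show ?thesis by simp
  qed
  have eq: "e = mat_smult (1 / (z$1$1 - z$2$2)) (lie_bracket z e)"
  proof -
    have "mat_smult (1 / (z$1$1 - z$2$2)) (mk 0 ((z$1$1 - z$2$2) * DD x y) 0) = mk 0 (DD x y) 0"
    proof -
      have c: "z$1$1 - z$2$2 \<noteq> 0" using z(3) by simp
      show ?thesis unfolding mat2_eq smult_ent mk_simps using c by simp
    qed
    then show ?thesis unfolding ze by (simp add: e)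
  qed
  have "e \<in> lower_central S k" for k
  proof (induction k)
    case 0 then show ?case using eS by simp
  next
    case (Suc k)
    have "lie_bracket z e \<in> {lie_bracket a b |a b. a \<in> S \<and> b \<in> lower_central S k}"
      by (rule CollectI, rule exI[of _ z], rule exI[of _ e]) (simp add: z(1) Suc.IH)
    then have "lie_bracket z e \<in> lin_span {lie_bracket a b |a b. a \<in> S \<and> b \<in> lower_central S k}"
      by (rule subsetD[OF lin_span_sub])
    then have "mat_smult (1 / (z$1$1 - z$2$2)) (lie_bracket z e) \<in> lin_span {lie_bracket a b |a b. a \<in> S \<and> b \<in> lower_central S k}"
      by (rule lin_span_smult)
    then show ?case using eq by simp
  qed
  moreover have "e \<noteq> 0" using e D by (simp add: mat2_eq)
  ultimately show ?thesis unfolding lie_nilpotent_def S_def by blast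
qed

lemma nilp_iff:
  fixes x y :: "'a::field^2^2"
  assumes "x \<in> upper_tri2" "y \<in> upper_tri2"
  shows "lie_nilpotent (lie_gen upper_tri2 x y) \<longleftrightarrow> DD x y = 0"
  using nilp_if nilp_only_if assms by blast

lemma vertices_eq:
  "ng_vertices (upper_tri2 :: ('a::field^2^2) set) = {x \<in> upper_tri2. x$1$1 \<noteq> x$2$2 \<or> x$1$2 \<noteq> 0}"
proof -
  have "x \<in> nil_set upper_tri2 \<longleftrightarrow> x \<in> upper_tri2 \<and> x$1$1 = x$2$2 \<and> x$1$2 = 0" for x :: "'a^2^2"
  proof
    assume a: "x \<in> nil_set upper_tri2"
    then have xL: "x \<in> upper_tri2" by (simp add: nil_set_def)
    have "DD (mk 1 0 0) x = 0" "DD (mk 0 1 0) x = 0"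
      using a nilp_iff[OF mk_L xL] unfolding nil_set_def by auto
    then show "x \<in> upper_tri2 \<and> x$1$1 = x$2$2 \<and> x$1$2 = 0" using xL by (simp add: DD_def)
  next
    assume xa: "x \<in> upper_tri2 \<and> x$1$1 = x$2$2 \<and> x$1$2 = 0"
    have "lie_nilpotent (lie_gen upper_tri2 h x)" if "h \<in> upper_tri2" for h
    proof (rule nilp_if)
      show "DD h x = 0" using xa unfolding DD_def by simp
    qed (use xa that in auto)
    then show "x \<in> nil_set upper_tri2" unfolding nil_set_def using xa by blast
  qed
  then show ?thesis unfolding ng_vertices_def by auto
qed



lemma card_L: "card (upper_tri2 :: ('a::{field,finite}^2^2) set) = CARD('a)^3"
proof -
  let ?f = "\<lambda>(a,b,d). mk a b d :: 'a^2^2"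
  have img: "upper_tri2 = ?f ` UNIV"
  proof
    show "upper_tri2 \<subseteq> ?f ` UNIV"
    proof
      fix x :: "'a^2^2" assume "x \<in> upper_tri2"
      then have "x = ?f (x$1$1, x$1$2, x$2$2)" by (simp add: mat2_eq upper_tri2_def)
      then show "x \<in> ?f ` UNIV" by blast
    qed
  qed auto
  have inj: "inj ?f" unfolding inj_def by (auto simp: mat2_eq)
  have "card (UNIV :: ('a\<times>'a\<times>'a) set) = CARD('a)^3"
    by (simp add: UNIV_Times_UNIV[symmetric] card_cartesian_product power3_eq_cube del: UNIV_Times_UNIV)
  then show ?thesis using img inj card_image by metis
qed

lemma card_nil: "card {x \<in> (upper_tri2 :: ('a::{field,finite}^2^2) set). \<not> (x$1$1 \<noteq> x$2$2 \<or> x$1$2 \<noteq> 0)} = CARD('a)"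
proof -
  let ?f = "\<lambda>d. mk d 0 d :: 'a^2^2"
  have img: "{x \<in> (upper_tri2 :: ('a^2^2) set). \<not> (x$1$1 \<noteq> x$2$2 \<or> x$1$2 \<noteq> 0)} = ?f ` UNIV"
  proof
    show "{x \<in> (upper_tri2 :: ('a^2^2) set). \<not> (x$1$1 \<noteq> x$2$2 \<or> x$1$2 \<noteq> 0)} \<subseteq> ?f ` UNIV"
    proof
      fix x :: "'a^2^2" assume "x \<in> {x \<in> (upper_tri2 :: ('a^2^2) set). \<not> (x$1$1 \<noteq> x$2$2 \<or> x$1$2 \<noteq> 0)}"
      then have "x = ?f (x$2$2)" by (simp add: mat2_eq upper_tri2_def)
      then show "x \<in> ?f ` UNIV" by blast
    qed
  qed auto
  have inj: "inj ?f" unfolding inj_def by (auto simp: mat2_eq)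
  show ?thesis using img inj card_image by metis
qed

lemma card_comp:
  fixes x :: "'a::{field,finite}^2^2"
  assumes x: "x \<in> upper_tri2" "x$1$1 \<noteq> x$2$2 \<or> x$1$2 \<noteq> 0"
  shows "card {y \<in> upper_tri2. (y$1$1 \<noteq> y$2$2 \<or> y$1$2 \<noteq> 0) \<and> DD x y = 0} = CARD('a) * (CARD('a) - 1)"
proof -
  define p where "p = x$1$1 - x$2$2"
  define r where "r = x$1$2"
  have pr: "p \<noteq> 0 \<or> r \<noteq> 0" using x(2) unfolding p_def r_def by auto
  let ?f = "\<lambda>(l,d). mk (l*p + d) (l*r) d :: 'a^2^2"
  let ?C = "{y \<in> upper_tri2. (y$1$1 \<noteq> y$2$2 \<or> y$1$2 \<noteq> 0) \<and> DD x y = 0}"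
  have img: "?C = ?f ` ((UNIV - {0}) \<times> UNIV)"
  proof
    show "?C \<subseteq> ?f ` ((UNIV - {0}) \<times> UNIV)"
    proof
      fix y :: "'a^2^2" assume y: "y \<in> ?C"
      have y21: "y$2$1 = 0" using y by (simp add: upper_tri2_def)
      have Dy: "p * y$1$2 = (y$1$1 - y$2$2) * r" using y unfolding DD_def p_def r_def by simp
      show "y \<in> ?f ` ((UNIV - {0}) \<times> UNIV)"
      proof (cases "p = 0")
        case False
        define l where "l = (y$1$1 - y$2$2) / p"
        have "y$1$2 = l * r" using Dy False unfolding l_def by (simp add: field_simps)
        moreover have "y$1$1 = l*p + y$2$2" using False unfolding l_def by simp
        moreover have "l \<noteq> 0" using y False \<open>y$1$2 = l * r\<close> unfolding l_def by auto
        ultimately have "y = ?f (l, y$2$2)" "(l, y$2$2) \<in> (UNIV - {0}) \<times> UNIV"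
          using y21 by (simp_all add: mat2_eq)
        then show ?thesis by blast
      next
        case True
        then have r0: "r \<noteq> 0" using pr by simp
        define l where "l = y$1$2 / r"
        have "y$1$1 - y$2$2 = 0" using Dy True r0 by simp
        then have "y$1$1 = l*p + y$2$2" using True by simp
        moreover have "y$1$2 = l * r" using r0 unfolding l_def by simp
        moreover have "l \<noteq> 0" using y r0 \<open>y$1$1 - y$2$2 = 0\<close> unfolding l_def by auto
        ultimately have "y = ?f (l, y$2$2)" "(l, y$2$2) \<in> (UNIV - {0}) \<times> UNIV"
          using y21 by (simp_all add: mat2_eq)
        then show ?thesis by blast
      qed
    qed
  next
    show "?f ` ((UNIV - {0}) \<times> UNIV) \<subseteq> ?C"
    proof
      fix y assume "y \<in> ?f ` ((UNIV - {0}) \<times> UNIV)"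
      then obtain l d where l: "l \<noteq> 0" and y: "y = mk (l*p + d) (l*r) d" by auto
      have "l*p \<noteq> 0 \<or> l*r \<noteq> 0" using l pr by simp
      then have "y$1$1 \<noteq> y$2$2 \<or> y$1$2 \<noteq> 0" using y by auto
      moreover have "DD x y = 0" unfolding DD_def y p_def[symmetric] r_def[symmetric]
        by (simp add: algebra_simps)
      ultimately show "y \<in> ?C" using y mk_L by blast
    qed
  qed
  have key: "l = l' \<and> d = d'" if h: "mk (l*p + d) (l*r) d = (mk (l'*p + d') (l'*r) d' :: 'a^2^2)" for l d l' d'
  proof -
    have "(mk (l*p + d) (l*r) d :: 'a^2^2)$1$1 = (mk (l'*p + d') (l'*r) d' :: 'a^2^2)$1$1"
      "(mk (l*p + d) (l*r) d :: 'a^2^2)$1$2 = (mk (l'*p + d') (l'*r) d' :: 'a^2^2)$1$2"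
      "(mk (l*p + d) (l*r) d :: 'a^2^2)$2$2 = (mk (l'*p + d') (l'*r) d' :: 'a^2^2)$2$2"
      using h by (rule arg_cong)+
    note hh = this
    note e = hh[unfolded mk_simps]
    have "l*p = l'*p" using e(1) e(3) by (metis add_right_cancel)
    then show "l = l' \<and> d = d'" using e pr by auto
  qed
  have inj: "inj_on ?f ((UNIV - {0}) \<times> UNIV)"
    unfolding inj_on_def using key by auto
  have "card ((UNIV - {0::'a}) \<times> (UNIV :: 'a set)) = (CARD('a) - 1) * CARD('a)"
    by (simp add: card_cartesian_product card_Diff_subset)
  moreover have "card ?C = card ((UNIV - {0::'a}) \<times> (UNIV :: 'a set))"
    unfolding img by (rule card_image[OF inj])
  ultimately show ?thesis by (simp add: mult.commute)
qed



theorem theorem4p6: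
  fixes q :: nat
  assumes "q = CARD('a::{field,finite})"
  defines "L \<equiv> (upper_tri2 :: ('a^2^2) set)"
  shows "card (conn_components (ng_vertices L) (ng_adj L)) = q + 1
    \<and> (\<forall>C \<in> conn_components (ng_vertices L) (ng_adj L).
          card C = q * (q - 1) \<and> is_clique C (ng_adj L))"
proof -
  define V where "V = ng_vertices L"
  have V: "V = {x \<in> L. x$1$1 \<noteq> x$2$2 \<or> x$1$2 \<noteq> 0}"
    unfolding V_def L_def by (rule vertices_eq)
  have VL: "\<And>x. x \<in> V \<Longrightarrow> x \<in> upper_tri2" using V L_def by auto
  have nzV: "\<And>x. x \<in> V \<Longrightarrow> x$1$1 \<noteq> x$2$2 \<or> x$1$2 \<noteq> 0" using V by auto
  have adj: "ng_adj L x y \<longleftrightarrow> x \<in> V \<and> y \<in> V \<and> x \<noteq> y \<and> DD x y = 0" for x y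
  proof -
    have "x \<in> V \<Longrightarrow> y \<in> V \<Longrightarrow> lie_nilpotent (lie_gen L x y) \<longleftrightarrow> DD x y = 0"
      unfolding L_def using VL nilp_iff by blast
    then show ?thesis unfolding ng_adj_def V_def by blast
  qed
  define comp where "comp x = {y \<in> V. DD x y = 0}" for x
  have tr: "DD y z = 0" if "x \<in> V" "DD x y = 0" "DD x z = 0" for x y z
    using DD_trans[of y x z] DD_sym that nzV by blast
  define R where "R = (\<lambda>u v. u \<in> V \<and> v \<in> V \<and> ng_adj L u v)"
  have ceq: "{y \<in> V. R\<^sup>*\<^sup>* x y} = comp x" if xV: "x \<in> V" for x
  proof
    show "{y \<in> V. R\<^sup>*\<^sup>* x y} \<subseteq> comp x"
    proof
      fix y assume "y \<in> {y \<in> V. R\<^sup>*\<^sup>* x y}"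
      then have yV: "y \<in> V" and st: "R\<^sup>*\<^sup>* x y" by auto
      from st have "DD x y = 0"
      proof (induction rule: rtranclp_induct)
        case base then show ?case by (rule DD_refl)
      next
        case (step y z)
        then have "y \<in> V" "DD y z = 0" "DD x y = 0" unfolding R_def adj by auto
        then show ?case using DD_trans[of x y z] nzV by blast
      qed
      then show "y \<in> comp x" unfolding comp_def using yV by simp
    qed
  next
    show "comp x \<subseteq> {y \<in> V. R\<^sup>*\<^sup>* x y}"
    proof
      fix y assume "y \<in> comp x"
      then have yV: "y \<in> V" and D: "DD x y = 0" unfolding comp_def by auto
      have "R\<^sup>*\<^sup>* x y"
      proof (cases "x = y")
        case True then show ?thesis by simp
      next
        case False
        then have "R x y" unfolding R_def adj using xV yV D by simp
        then show ?thesis by (rule r_into_rtranclp)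
      qed
      then show "y \<in> {y \<in> V. R\<^sup>*\<^sup>* x y}" using yV by simp
    qed
  qed
  have cc: "conn_components (ng_vertices L) (ng_adj L) = comp ` V"
    unfolding conn_components_def V_def[symmetric] R_def[symmetric]
    using ceq by (rule image_cong[OF refl])
  have ccard: "card (comp x) = q * (q - 1)" if "x \<in> V" for x
  proof -
    have "comp x = {y \<in> upper_tri2. (y$1$1 \<noteq> y$2$2 \<or> y$1$2 \<noteq> 0) \<and> DD x y = 0}"
      unfolding comp_def V L_def by auto
    then show ?thesis using card_comp[of x] that VL nzV assms(1) by simp
  qed
  have cliq: "is_clique (comp x) (ng_adj L)" if "x \<in> V" for x
    unfolding is_clique_def comp_def adj using tr that by blast
  have disj: "c1 \<inter> c2 = {}" if c: "c1 \<in> comp ` V" "c2 \<in> comp ` V" "c1 \<noteq> c2" for c1 c2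
  proof (rule ccontr)
    assume "c1 \<inter> c2 \<noteq> {}"
    then obtain x1 x2 z where x: "x1 \<in> V" "x2 \<in> V" "c1 = comp x1" "c2 = comp x2"
      and z: "z \<in> comp x1" "z \<in> comp x2" using c by blast
    have "DD x1 z = 0" "DD x2 z = 0" "z \<in> V" using z unfolding comp_def by auto
    note zz = this
    have "DD x1 w = 0 \<longleftrightarrow> DD x2 w = 0" for w
    proof
      assume "DD x1 w = 0"
      then have "DD z w = 0" using tr[of x1 z w] zz x by blast
      then show "DD x2 w = 0" using DD_trans[of x2 z w] zz nzV by blast
    next
      assume "DD x2 w = 0"
      then have "DD z w = 0" using tr[of x2 z w] zz x by blast
      then show "DD x1 w = 0" using DD_trans[of x1 z w] zz nzV by blast
    qed
    then have "comp x1 = comp x2" unfolding comp_def by auto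
    then show False using x c by simp
  qed
  have un: "\<Union>(comp ` V) = V"
    unfolding comp_def using DD_refl by auto
  have finV: "finite V" by simp
  have "card V = card L - card {x \<in> L. \<not> (x$1$1 \<noteq> x$2$2 \<or> x$1$2 \<noteq> 0)}"
  proof -
    have "V = L - {x \<in> L. \<not> (x$1$1 \<noteq> x$2$2 \<or> x$1$2 \<noteq> 0)}" using V by auto
    then show ?thesis by (simp add: card_Diff_subset)
  qed
  then have cV: "card V = q^3 - q"
    unfolding L_def card_L card_nil assms(1) .
  have "q * (q - 1) * card (comp ` V) = card (\<Union>(comp ` V))"
    by (rule card_partition) (use ccard disj un in auto)
  then have eqn: "q * (q - 1) * card (comp ` V) = q^3 - q" using un cV by simp
  have q2: "q \<ge> 2"
  proof -
    have "card {0::'a, 1} \<le> CARD('a)" by (rule card_mono) auto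
    then show ?thesis using assms(1) by simp
  qed
  have "q^3 - q = q * (q - 1) * (q + 1)"
  proof -
    obtain m where m: "q = Suc m" using q2 by (cases q) auto
    show ?thesis unfolding m by (simp add: algebra_simps power3_eq_cube)
  qed
  with eqn have "q * (q - 1) * card (comp ` V) = q * (q - 1) * (q + 1)" by simp
  then have "q * (q - 1) = 0 \<or> card (comp ` V) = q + 1" by (simp only: mult_cancel_left)
  moreover have "q * (q - 1) \<noteq> 0" using q2 by simp
  ultimately have cq: "card (comp ` V) = q + 1" by blast
  have all: "\<forall>C\<in>comp ` V. card C = q * (q - 1) \<and> is_clique C (ng_adj L)"
    using ccard cliq by blast
  show ?thesis unfolding cc using cq all by (rule conjI)
qed


end
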